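(* For all $n\in\mathbb N$, \[ \max\Big\{|\alpha(n,0)|,\ |\alpha(n,1)|,\ \sum_{s=2}^\infty|\alpha(n,s)|\Big\}\le\frac1N\Big(1+\frac6N\Big)^{n-1}. \]
   Context: $E$ is a finite set with $N=\#E>8$ elements; $Q$ is an irreducible stochastic matrix on $E$ with $Q(x,y)=Q(y,x)$ for all $x,y$ and $\mathrm{tr}(Q)=0$. The function $\alpha:\mathbb Z_+\times\mathbb Z_+\to\mathbb R$ is defined by $\alpha(0,s)=0$ for all $s$ and, for $n\in\mathbb Z_+$, $\alpha(n+1,0)=\frac2{N^2}+\alpha(n,0)+\frac2{N^2}\sum_{s\ge1}\alpha(n,s)\mathrm{tr}(Q^s)$, $\alpha(n+1,1)=-\frac2{N^2}+\frac{N-2}N\alpha(n,1)-\frac2{N^2}\sum_{s\ge1}\alpha(n,s)\mathrm{tr}(Q^s)$, $\alpha(n+1,s)=\frac{N-2}N\alpha(n,s)+\frac2N\alpha(n,s-1)$ for $s\ge2$. *)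

theory Defs
  imports "HOL-Analysis.Analysis"
begin

primrec mpow :: "('e::finite \<Rightarrow> 'e \<Rightarrow> real) \<Rightarrow> nat \<Rightarrow> 'e \<Rightarrow> 'e \<Rightarrow> real" where
  "mpow Q 0 = (\<lambda>x y. if x = y then 1 else 0)"
| "mpow Q (Suc k) = (\<lambda>x y. \<Sum>z\<in>UNIV. Q x z * mpow Q k z y)"

definition mtrace :: "('e::finite \<Rightarrow> 'e \<Rightarrow> real) \<Rightarrow> real" where
  "mtrace A = (\<Sum>x\<in>UNIV. A x x)"

definition stochastic :: "('e::finite \<Rightarrow> 'e \<Rightarrow> real) \<Rightarrow> bool" where
  "stochastic Q \<longleftrightarrow> (\<forall>x y. 0 \<le> Q x y) \<and> (\<forall>x. (\<Sum>y\<in>UNIV. Q x y) = 1)"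

definition irreducible_mat :: "('e::finite \<Rightarrow> 'e \<Rightarrow> real) \<Rightarrow> bool" where
  "irreducible_mat Q \<longleftrightarrow> (\<forall>x y. \<exists>k. 0 < mpow Q k x y)"

text \<open>alpha_row N t n s = alpha(n,s), where t s = tr(Q^s).  The sum over s >= 1 in the
  recursion is taken over 1..n, since alpha(n,s) = 0 for s > n.\<close>

primrec alpha_row :: "real \<Rightarrow> (nat \<Rightarrow> real) \<Rightarrow> nat \<Rightarrow> nat \<Rightarrow> real" where
  "alpha_row N t 0 = (\<lambda>s. 0)"
| "alpha_row N t (Suc n) =
     (let a = alpha_row N t n; S = (\<Sum>s\<in>{1..n}. a s * t s) in
      (\<lambda>s. if s = 0 then 2 / N^2 + a 0 + 2 / N^2 * S
           else if s = 1 then - 2 / N^2 + (N - 2) / N * a 1 - 2 / N^2 * S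
           else (N - 2) / N * a s + 2 / N * a (s - 1)))"

definition alpha :: "('e::finite \<Rightarrow> 'e \<Rightarrow> real) \<Rightarrow> nat \<Rightarrow> nat \<Rightarrow> real" where
  "alpha Q n s = alpha_row (real CARD('e)) (\<lambda>k. mtrace (mpow Q k)) n s"

end

theory Submission
  imports Defs
begin

lemma alpha_row_zero: "n < s \<Longrightarrow> alpha_row N t n s = 0"
  by (induction n arbitrary: s) (auto simp: Let_def)

lemma alpha_row_bound:
  fixes N :: real
  assumes N: "N > 8" and t1: "t 1 = 0" and tb: "\<And>s. \<bar>t s\<bar> \<le> N" and n: "1 \<le> n"
  shows "\<bar>alpha_row N t n 0\<bar> \<le> 1/N*(1+6/N)^(n-1) \<and> \<bar>alpha_row N t n 1\<bar> \<le> 1/N*(1+6/N)^(n-1)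
     \<and> (\<Sum>s\<in>{2..n}. \<bar>alpha_row N t n s\<bar>) \<le> 1/N*(1+6/N)^(n-1)"
  using n
proof (induction n rule: dec_induct)
  case base
  have "2/N^2 \<le> 1/N" using N by (simp add: field_simps power2_eq_square)
  then show ?case using N by (simp add: Let_def)
next
  case (step n)
  define a where "a = alpha_row N t n"
  define S where "S = (\<Sum>s\<in>{1..n}. a s * t s)"
  define c where "c = (\<Sum>s\<in>{2..n}. \<bar>a s\<bar>)"
  define M where "M = 1/N*(1+6/N)^(n-1)"
  have IH: "\<bar>a 0\<bar> \<le> M" "\<bar>a 1\<bar> \<le> M" "c \<le> M" using step.IH by (auto simp: a_def c_def M_def)
  have Np: "N > 0" using N by simp
  have M1: "M \<ge> 1/N"
  proof -
    have "(1+6/N)^(n-1) \<ge> 1" using Np by (intro one_le_power) simp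
    then show ?thesis unfolding M_def using Np by (simp add: field_simps)
  qed
  have Mnext: "1/N*(1+6/N)^(Suc n-1) = M*(1+6/N)"
    using step.hyps unfolding M_def by (cases n) auto
  have S_eq: "S = (\<Sum>s\<in>{2..n}. a s * t s)"
    unfolding S_def using step.hyps
    using t1 by (simp add: sum.atLeast_Suc_atMost numeral_2_eq_2)
  have "\<bar>S\<bar> \<le> (\<Sum>s\<in>{2..n}. \<bar>a s\<bar> * N)"
    unfolding S_eq
    by (rule order_trans[OF sum_abs], rule sum_mono)
       (simp add: abs_mult mult_left_mono tb)
  also have "\<dots> = N * c" unfolding c_def by (simp add: sum_distrib_left mult.commute)
  finally have Sb: "\<bar>S\<bar> \<le> N * c" .
  have SbM: "2/N^2 * \<bar>S\<bar> \<le> 2/N * M"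
  proof -
    have "2/N^2 * \<bar>S\<bar> \<le> 2/N^2 * (N*c)" using Sb Np by (intro mult_left_mono) auto
    also have "\<dots> = 2/N * c" using Np by (simp add: field_simps power2_eq_square)
    also have "\<dots> \<le> 2/N * M" using IH(3) Np by (intro mult_left_mono) auto
    finally show ?thesis .
  qed
  have small: "2/N^2 \<le> 4/N * M"
  proof -
    have "2/N^2 \<le> 4/N * (1/N)" using Np by (simp add: field_simps power2_eq_square)
    also have "\<dots> \<le> 4/N * M" using M1 Np by (intro mult_left_mono) auto
    finally show ?thesis .
  qed
  have rec: "alpha_row N t (Suc n) = (\<lambda>s. if s = 0 then 2 / N^2 + a 0 + 2 / N^2 * S
           else if s = 1 then - 2 / N^2 + (N - 2) / N * a 1 - 2 / N^2 * S
           else (N - 2) / N * a s + 2 / N * a (s - 1))"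
    unfolding a_def S_def by (simp only: alpha_row.simps Let_def)
  have dist: "M*(1+6/N) = M + 2/N*M + 4/N*M" using Np by (simp add: field_simps)
  have c0: "(N-2)/N \<ge> 0" "(N-2)/N \<le> 1" "2/N \<ge> 0" using Np N by auto
  have b0: "\<bar>alpha_row N t (Suc n) 0\<bar> \<le> M*(1+6/N)"
  proof -
    have "\<bar>alpha_row N t (Suc n) 0\<bar> \<le> 2/N^2 + \<bar>a 0\<bar> + 2/N^2*\<bar>S\<bar>"
    proof -
      have e: "\<bar>2/N^2*S\<bar> = 2/N^2*\<bar>S\<bar>" by (simp add: abs_mult)
      have "\<bar>2/N^2 + a 0 + 2/N^2*S\<bar> \<le> 2/N^2 + \<bar>a 0\<bar> + 2/N^2*\<bar>S\<bar>"
        using e abs_triangle_ineq[of "2/N^2 + a 0" "2/N^2*S"] abs_triangle_ineq[of "2/N^2" "a 0"]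
          abs_of_nonneg[of "2/N^2", OF divide_nonneg_pos[OF _ zero_less_power[OF Np]]] by linarith
      moreover have "alpha_row N t (Suc n) 0 = 2/N^2 + a 0 + 2/N^2*S" by (simp only: rec) simp
      ultimately show ?thesis by simp
    qed
    then show ?thesis using IH SbM small dist by linarith
  qed
  have b1: "\<bar>alpha_row N t (Suc n) 1\<bar> \<le> M*(1+6/N)"
  proof -
    have "\<bar>(N-2)/N * a 1\<bar> \<le> M"
    proof -
      have "\<bar>(N-2)/N * a 1\<bar> = (N-2)/N * \<bar>a 1\<bar>" using c0 N by (simp add: abs_mult)
      also have "\<dots> \<le> 1 * \<bar>a 1\<bar>" using c0 by (intro mult_right_mono) auto
      finally show ?thesis using IH(2) by simp
    qed
    then have "\<bar>alpha_row N t (Suc n) 1\<bar> \<le> 2/N^2 + M + 2/N^2*\<bar>S\<bar>"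
    proof -
      have e: "\<bar>2/N^2*S\<bar> = 2/N^2*\<bar>S\<bar>" by (simp add: abs_mult)
      have f: "\<bar>- 2/N^2\<bar> = 2/N^2" by simp
      have "\<bar>- 2/N^2 + (N-2)/N * a 1 - 2/N^2*S\<bar> \<le> 2/N^2 + \<bar>(N-2)/N * a 1\<bar> + 2/N^2*\<bar>S\<bar>"
        using e f abs_triangle_ineq4[of "- 2/N^2 + (N-2)/N * a 1" "2/N^2*S"]
          abs_triangle_ineq[of "- 2/N^2" "(N-2)/N * a 1"] by linarith
      moreover have "alpha_row N t (Suc n) 1 = - 2/N^2 + (N-2)/N * a 1 - 2/N^2*S" by (simp only: rec) simp
      ultimately show ?thesis using \<open>\<bar>(N-2)/N * a 1\<bar> \<le> M\<close> by simp
    qed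
    then show ?thesis using IH SbM small dist M1 Np by linarith
  qed
  have a_out: "a (Suc n) = 0" unfolding a_def by (simp add: alpha_row_zero)
  have "(\<Sum>s\<in>{2..Suc n}. \<bar>alpha_row N t (Suc n) s\<bar>)
      \<le> (\<Sum>s\<in>{2..Suc n}. (N-2)/N * \<bar>a s\<bar> + 2/N * \<bar>a (s-1)\<bar>)"
  proof (rule sum_mono)
    fix s assume "s \<in> {2..Suc n}"
    then have v: "alpha_row N t (Suc n) s = (N-2)/N*a s + 2/N*a(s-1)" by (simp only: rec) simp
    have e1: "\<bar>(N-2)/N*a s\<bar> = (N-2)/N*\<bar>a s\<bar>" by (simp only: abs_mult abs_of_nonneg[OF c0(1)])
    have e2: "\<bar>2/N*a (s-1)\<bar> = 2/N*\<bar>a (s-1)\<bar>" by (simp only: abs_mult abs_of_nonneg[OF c0(3)])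
    show "\<bar>alpha_row N t (Suc n) s\<bar> \<le> (N-2)/N * \<bar>a s\<bar> + 2/N * \<bar>a (s-1)\<bar>"
      unfolding v using abs_triangle_ineq[of "(N-2)/N*a s" "2/N*a(s-1)"] e1 e2 by linarith
  qed
  also have "\<dots> = (N-2)/N * (\<Sum>s\<in>{2..Suc n}. \<bar>a s\<bar>) + 2/N * (\<Sum>s\<in>{2..Suc n}. \<bar>a (s-1)\<bar>)"
    by (simp only: sum.distrib sum_distrib_left)
  also have "(\<Sum>s\<in>{2..Suc n}. \<bar>a s\<bar>) = c"
    unfolding c_def using step.hyps a_out by (simp add: sum.atLeast_Suc_atMost)
  also have "(\<Sum>s\<in>{2..Suc n}. \<bar>a (s-1)\<bar>) = (\<Sum>s\<in>{1..n}. \<bar>a s\<bar>)"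
    by (simp only: numeral_2_eq_2 One_nat_def[symmetric] sum.shift_bounds_cl_Suc_ivl) simp
  also have "\<dots> = \<bar>a 1\<bar> + c"
    unfolding c_def using step.hyps by (simp add: sum.atLeast_Suc_atMost numeral_2_eq_2)
  finally have "(\<Sum>s\<in>{2..Suc n}. \<bar>alpha_row N t (Suc n) s\<bar>) \<le> (N - 2) / N * c + 2 / N * (\<bar>a 1\<bar> + c)" .
  also have "\<dots> = c + 2/N * \<bar>a 1\<bar>" using Np by (simp add: field_simps)
  also have "\<dots> \<le> M + 2/N * M" using IH c0 by (intro add_mono mult_left_mono) auto
  also have "\<dots> \<le> M*(1+6/N)"
  proof -
    have "0 \<le> 1/N" using Np by simp
    then have "0 \<le> M" using M1 by linarith
    then have "0 \<le> 4/N*M" using Np by simp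
    then show ?thesis using dist by linarith
  qed
  finally have b2: "(\<Sum>s\<in>{2..Suc n}. \<bar>alpha_row N t (Suc n) s\<bar>) \<le> M*(1+6/N)" .
  show ?case using b0 b1 b2 Mnext by simp
qed

lemma mpow_stoch:
  assumes "stochastic Q"
  shows "(\<forall>x y. 0 \<le> mpow Q k x y) \<and> (\<forall>x. (\<Sum>y\<in>UNIV. mpow Q k x y) = 1)"
proof (induction k)
  case 0
  then show ?case by simp
next
  case (Suc k)
  have nn: "\<forall>x y. 0 \<le> mpow Q (Suc k) x y"
    using Suc assms unfolding stochastic_def by (auto intro!: sum_nonneg)
  have "(\<Sum>y\<in>UNIV. mpow Q (Suc k) x y) = 1" for x
  proof -
    have "(\<Sum>y\<in>UNIV. mpow Q (Suc k) x y) = (\<Sum>z\<in>UNIV. Q x z * (\<Sum>y\<in>UNIV. mpow Q k z y))"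
      by (simp add: sum_distrib_left) (rule sum.swap)
    also have "\<dots> = 1" using Suc assms unfolding stochastic_def by simp
    finally show ?thesis .
  qed
  then show ?case using nn by blast
qed

lemma mpow_le1:
  assumes "stochastic Q"
  shows "mpow Q k x y \<le> 1"
proof -
  have "mpow Q k x y \<le> (\<Sum>y\<in>UNIV. mpow Q k x y)"
    using mpow_stoch[OF assms, of k]
    by (intro member_le_sum) auto
  then show ?thesis using mpow_stoch[OF assms, of k] by simp
qed

theorem lemma3p4:
  fixes Q :: "'e::finite \<Rightarrow> 'e \<Rightarrow> real" and n :: nat
  assumes "CARD('e) > 8"
    and "stochastic Q" and "irreducible_mat Q"
    and "\<And>x y. Q x y = Q y x"
    and "mtrace Q = 0"
  shows "max (max \<bar>alpha Q n 0\<bar> \<bar>alpha Q n 1\<bar>) (\<Sum>s. \<bar>alpha Q n (s + 2)\<bar>)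
           \<le> 1 / real CARD('e) * (1 + 6 / real CARD('e)) powr (real n - 1)"
proof -
  define N where "N = real CARD('e)"
  define t where "t = (\<lambda>k. mtrace (mpow Q k))"
  have N8: "N > 8" using assms(1) unfolding N_def by simp
  have mp1: "mpow Q 1 = Q" by (auto simp: fun_eq_iff mult.commute[of "Q _ _"] if_distrib cong: if_cong)
  have t1: "t 1 = 0" unfolding t_def mp1 using assms(5) .
  have tb: "\<bar>t s\<bar> \<le> N" for s
  proof -
    have "0 \<le> t s" unfolding t_def mtrace_def using mpow_stoch[OF assms(2), of s]
      by (auto intro!: sum_nonneg)
    moreover have "t s \<le> (\<Sum>x\<in>(UNIV::'e set). 1)" unfolding t_def mtrace_def
      by (intro sum_mono mpow_le1[OF assms(2)])
    ultimately show ?thesis unfolding N_def by simp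
  qed
  have al: "alpha Q n s = alpha_row N t n s" for s unfolding alpha_def N_def t_def by simp
  define A where "A = {s. s + 2 \<le> n}"
  have finA: "finite A" unfolding A_def by (rule finite_subset[of _ "{..n}"]) auto
  have suminf_eq: "(\<Sum>s. \<bar>alpha Q n (s + 2)\<bar>) = (\<Sum>s\<in>{2..n}. \<bar>alpha_row N t n s\<bar>)"
  proof -
    have "(\<Sum>s. \<bar>alpha Q n (s + 2)\<bar>) = (\<Sum>s\<in>A. \<bar>alpha_row N t n (s + 2)\<bar>)"
      unfolding al by (rule suminf_finite[OF finA]) (auto simp: A_def alpha_row_zero)
    also have "\<dots> = (\<Sum>s\<in>(\<lambda>s. s+2) ` A. \<bar>alpha_row N t n s\<bar>)"
      by (subst sum.reindex) (auto simp: inj_on_def)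
    also have "(\<lambda>s. s+2) ` A = {2..n}"
    proof
      show "(\<lambda>s. s+2) ` A \<subseteq> {2..n}" by (auto simp: A_def)
      show "{2..n} \<subseteq> (\<lambda>s. s+2) ` A"
      proof
        fix x assume "x \<in> {2..n}"
        then show "x \<in> (\<lambda>s. s+2) ` A" by (intro image_eqI[of _ _ "x-2"]) (auto simp: A_def)
      qed
    qed
    finally show ?thesis .
  qed
  show ?thesis
  proof (cases "n = 0")
    case True
    have "1 + 6 / N \<noteq> 0" using N8 by (simp add: add_pos_nonneg[THEN less_imp_neq, symmetric])
    then have "0 < (1 + 6 / N) powr (real n - 1)" by simp
    then have "0 < 1 / N * (1 + 6 / N) powr (real n - 1)" using N8 by (simp add: powr_gt_zero)
    then show ?thesis using True suminf_eq unfolding N_def by (simp add: al alpha_def)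
  next
    case False
    have pw: "(1 + 6 / N) powr (real n - 1) = (1+6/N)^(n-1)"
    proof -
      have e: "real n - 1 = real (n-1)" using False by (simp add: of_nat_diff)
      have "0 < 1 + 6/N" using N8 by (simp add: add_pos_nonneg)
      then show ?thesis unfolding e by (rule powr_realpow)
    qed
    show ?thesis using alpha_row_bound[of N t n, OF N8 t1 tb] False suminf_eq pw
      unfolding N_def[symmetric] by (simp add: al)
  qed
qed

end
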